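(* Let $\Pi$ be an online subadditive coverage problem and $p\in[0,1]$. If there exists an $\alpha(p)$-competitive monotone algorithm for $\Pi$ in the $p$-sample independent model, then there exists an $\alpha(p)$-competitive algorithm for $\Pi$ in the $(\frac12,p)$-sample MRF model.
   Context: Subadditive coverage problem: $V$ is a set of demand points and $E$ a ground set of elements; for each $D \subseteq V$ there is a family $\mathcal{F}_D \subseteq 2^E$ of feasible solutions such that (a) $S_1\in\mathcal{F}_{D_1}$, $S_2\in\mathcal{F}_{D_2}$ imply $S_1\cup S_2\in\mathcal{F}_{D_1\cup D_2}$, and (b) $D_1\subseteq D_2$ implies $\mathcal{F}_{D_2}\subseteq\mathcal{F}_{D_1}$. The cost $c:2^E\to\mathbb{R}_{\ge0}$ is monotone and subadditive; $\mathrm{OPT}(D)=\min_{S\in\mathcal{F}_D}c(S)$. Online: demands arrive one at a time, and after each arrival the algorithm irrevocably adds elements so that its current set is feasible for all demands so far. $p$-sample independent model: an adversary chooses an unknown value set $V=\{v_1,\dots,v_n\}$; a sample $S\subseteq V$, containing each $v_i$ independently with known probability $p$, is revealed upfront; $R=V\setminus S$ arrive as demands in adversarial order. An algorithm is $\alpha(p)$-competitive if its expected cost is at most $\alpha(p)\cdot\mathrm{OPT}(V)$. It is monotone if it remains $\alpha(p)$-competitive when the sample set is augmented by moving some (possibly adversarially chosen) real values into it, i.e. the sample is any $S\supseteq S'$ with $S'$ containing each $v_i$ independently with probability $p$, and the demand set is $V\setminus S$. $(\frac12,p)$-sample MRF model: an adversary chooses an unknown value set $V=\{v_1,\dots,v_n\}$;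 a random sample $S\subseteq V$ is revealed upfront, where $(\mathbf{1}[v_i\in S])_{i\in[n]}$ has an unknown MRF distribution over $\{0,1\}^n$ (a distribution with $\Pr[x]\propto\exp(\sum_i\psi_i(x_i)+\sum_e\psi_e(x_e))$ for a hypergraph and potentials) such that for each $i$: $\Pr[v_i\in S]\ge1/2$, and $\Pr[v_i\in S\mid\text{membership of all }v_{i'},i'\neq i]\ge p$ for every conditioning. The values $V\setminus S$ arrive in adversarial order as demands. Competitiveness is measured against $\mathrm{OPT}(V)$ as in the $p$-sample model. *)

theory Defs
  imports "HOL-Probability.Probability"
begin

text \<open>Subadditive coverage problem on demand points of type 'v and ground elements of
  type 'e (ground set E = UNIV).  F D is the family of feasible solutions for the demand
  set D, c the cost function.\<close>
definition subadditive_coverage :: "('v set \<Rightarrow> 'e set set) \<Rightarrow> ('e set \<Rightarrow> real) \<Rightarrow> bool" where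
  "subadditive_coverage F c \<longleftrightarrow>
     (\<forall>D1 D2 S1 S2. S1 \<in> F D1 \<longrightarrow> S2 \<in> F D2 \<longrightarrow> S1 \<union> S2 \<in> F (D1 \<union> D2)) \<and>
     (\<forall>D1 D2. D1 \<subseteq> D2 \<longrightarrow> F D2 \<subseteq> F D1) \<and>
     (\<forall>S. 0 \<le> c S) \<and>
     (\<forall>A B. A \<subseteq> B \<longrightarrow> c A \<le> c B) \<and>
     (\<forall>A B. c (A \<union> B) \<le> c A + c B)"

definition OPT :: "('v set \<Rightarrow> 'e set set) \<Rightarrow> ('e set \<Rightarrow> real) \<Rightarrow> 'v set \<Rightarrow> real" where
  "OPT F c D = Inf (c ` F D)"

text \<open>A deterministic online algorithm maps the revealed sample S and the list of demands
  that have arrived so far to its current solution.\<close>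
type_synonym ('v, 'e) det_alg = "'v set \<Rightarrow> 'v list \<Rightarrow> 'e set"

definition valid_run :: "('v set \<Rightarrow> 'e set set) \<Rightarrow> ('v, 'e) det_alg \<Rightarrow> 'v set \<Rightarrow> 'v list \<Rightarrow> bool" where
  "valid_run F A S xs \<longleftrightarrow>
     (\<forall>k \<in> {1..length xs}. A S (take k xs) \<in> F (set (take k xs))) \<and>
     (\<forall>k < length xs. A S (take k xs) \<subseteq> A S (take (Suc k) xs))"

text \<open>Randomized online algorithm = distribution over deterministic ones (independent
  of the sample).  An adversary maps the drawn sample to (revealed sample, arrival order).
  Expected final cost:\<close>
definition expected_cost ::
  "('e set \<Rightarrow> real) \<Rightarrow> 'v set pmf \<Rightarrow> ('v, 'e) det_alg pmf \<Rightarrow> ('v set \<Rightarrow> 'v set \<times> 'v list) \<Rightarrow> ennreal" where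
  "expected_cost c \<mu> alg adv =
     (\<integral>\<^sup>+ S. (\<integral>\<^sup>+ A. ennreal (c (A (fst (adv S)) (snd (adv S)))) \<partial>measure_pmf alg) \<partial>measure_pmf \<mu>)"

definition valid_on ::
  "('v set \<Rightarrow> 'e set set) \<Rightarrow> 'v set pmf \<Rightarrow> ('v, 'e) det_alg pmf \<Rightarrow> ('v set \<Rightarrow> 'v set \<times> 'v list) \<Rightarrow> bool" where
  "valid_on F \<mu> alg adv \<longleftrightarrow>
     (\<forall>S \<in> set_pmf \<mu>. \<forall>A \<in> set_pmf alg. valid_run F A (fst (adv S)) (snd (adv S)))"

definition indep_sample :: "real \<Rightarrow> 'v set \<Rightarrow> 'v set pmf \<Rightarrow> bool" where
  "indep_sample p V \<mu> \<longleftrightarrow>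
     (\<forall>S. pmf \<mu> S = (if S \<subseteq> V then (\<Prod>v\<in>V. if v \<in> S then p else 1 - p) else 0))"

text \<open>Markov random field distribution of the sample on value set V: node potentials psi,
  a hypergraph H on V with hyperedge potentials phi (phi e depends only on S \<inter> e).\<close>
definition MRF_weight :: "'v set \<Rightarrow> ('v \<Rightarrow> bool \<Rightarrow> real) \<Rightarrow> 'v set set \<Rightarrow> ('v set \<Rightarrow> 'v set \<Rightarrow> real) \<Rightarrow> 'v set \<Rightarrow> real" where
  "MRF_weight V psi H phi S = exp ((\<Sum>v\<in>V. psi v (v \<in> S)) + (\<Sum>e\<in>H. phi e (S \<inter> e)))"

definition is_MRF :: "'v set \<Rightarrow> 'v set pmf \<Rightarrow> bool" where
  "is_MRF V \<mu> \<longleftrightarrow>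
     (\<exists>psi H phi. H \<subseteq> Pow V \<and>
        (\<forall>S. pmf \<mu> S = (if S \<subseteq> V then MRF_weight V psi H phi S / (\<Sum>T\<in>Pow V. MRF_weight V psi H phi T)
                          else 0)))"

definition half_p_MRF :: "real \<Rightarrow> 'v set \<Rightarrow> 'v set pmf \<Rightarrow> bool" where
  "half_p_MRF p V \<mu> \<longleftrightarrow> is_MRF V \<mu> \<and>
     (\<forall>v\<in>V. measure_pmf.prob \<mu> {S. v \<in> S} \<ge> 1/2) \<and>
     (\<forall>v\<in>V. \<forall>T \<subseteq> V - {v}.
        measure_pmf.prob \<mu> {S. v \<in> S \<and> S - {v} = T} / measure_pmf.prob \<mu> {S. S - {v} = T} \<ge> p)"

definition listing :: "'v list \<Rightarrow> 'v set \<Rightarrow> bool" where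
  "listing xs A \<longleftrightarrow> distinct xs \<and> set xs = A"

definition feasible_instance :: "('v set \<Rightarrow> 'e set set) \<Rightarrow> 'v set \<Rightarrow> bool" where
  "feasible_instance F V \<longleftrightarrow> finite V \<and> F V \<noteq> {}"

text \<open>alpha-competitive monotone algorithm in the p-sample independent model: the adversary
  may augment the independent sample S' to any S with S' \<subseteq> S \<subseteq> V (chosen depending on S'),
  and orders the demands V - S arbitrarily.\<close>
definition monotone_competitive_indep ::
  "('v set \<Rightarrow> 'e set set) \<Rightarrow> ('e set \<Rightarrow> real) \<Rightarrow> real \<Rightarrow> real \<Rightarrow> ('v, 'e) det_alg pmf \<Rightarrow> bool" where
  "monotone_competitive_indep F c p \<alpha> alg \<longleftrightarrow>
     (\<forall>V \<mu> adv. feasible_instance F V \<longrightarrow> indep_sample p V \<mu> \<longrightarrow>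
        (\<forall>S' \<subseteq> V. S' \<subseteq> fst (adv S') \<and> fst (adv S') \<subseteq> V \<and> listing (snd (adv S')) (V - fst (adv S'))) \<longrightarrow>
        valid_on F \<mu> alg adv \<and> expected_cost c \<mu> alg adv \<le> ennreal (\<alpha> * OPT F c V))"

definition competitive_MRF ::
  "('v set \<Rightarrow> 'e set set) \<Rightarrow> ('e set \<Rightarrow> real) \<Rightarrow> real \<Rightarrow> real \<Rightarrow> ('v, 'e) det_alg pmf \<Rightarrow> bool" where
  "competitive_MRF F c p \<alpha> alg \<longleftrightarrow>
     (\<forall>V \<mu> \<sigma>. feasible_instance F V \<longrightarrow> half_p_MRF p V \<mu> \<longrightarrow>
        (\<forall>S. listing (\<sigma> S) (V - S)) \<longrightarrow>
        valid_on F \<mu> alg (\<lambda>S. (S, \<sigma> S)) \<and>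
        expected_cost c \<mu> alg (\<lambda>S. (S, \<sigma> S)) \<le> ennreal (\<alpha> * OPT F c V))"

end

theory Submission
  imports Defs
begin

definition prw :: "real \<Rightarrow> 'v set \<Rightarrow> 'v set \<Rightarrow> real" where
  "prw p V T = (\<Prod>v\<in>V. if v \<in> T then p else 1 - p)"

lemma sum_Pow_insert:
  assumes "finite V" "v \<notin> V"
  shows "(\<Sum>T\<in>Pow (insert v V). f T) = (\<Sum>T\<in>Pow V. f T + f (insert v T))"
proof -
  have inj: "inj_on (insert v) (Pow V)"
    using assms(2) by (auto simp: inj_on_def)
  have disj: "Pow V \<inter> insert v ` Pow V = {}" using assms(2) by auto
  have "(\<Sum>T\<in>Pow (insert v V). f T) = (\<Sum>T\<in>Pow V. f T) + (\<Sum>T\<in>insert v ` Pow V. f T)"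
    unfolding Pow_insert using assms(1) disj by (intro sum.union_disjoint) auto
  also have "(\<Sum>T\<in>insert v ` Pow V. f T) = (\<Sum>T\<in>Pow V. f (insert v T))"
    using inj by (simp add: sum.reindex)
  finally show ?thesis by (simp add: sum.distrib)
qed

lemma prw_insert1:
  assumes "finite V" "v \<notin> V" "T \<subseteq> V"
  shows "prw p (insert v V) T = (1 - p) * prw p V T"
proof -
  have "v \<notin> T" using assms by auto
  thus ?thesis using assms unfolding prw_def by simp
qed

lemma prw_insert2:
  assumes "finite V" "v \<notin> V" "T \<subseteq> V"
  shows "prw p (insert v V) (insert v T) = p * prw p V T"
proof -
  have "(\<Prod>u\<in>V. if u \<in> insert v T then p else 1 - p) = (\<Prod>u\<in>V. if u \<in> T then p else 1 - p)"
    using assms by (intro prod.cong) auto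
  thus ?thesis using assms unfolding prw_def by simp
qed

lemma prw_sum:
  assumes "finite V"
  shows "(\<Sum>T\<in>Pow V. prw p V T) = 1"
  using assms
proof (induction V rule: finite_induct)
  case empty
  then show ?case by (simp add: prw_def)
next
  case (insert v V)
  have "(\<Sum>T\<in>Pow (insert v V). prw p (insert v V) T)
      = (\<Sum>T\<in>Pow V. prw p (insert v V) T + prw p (insert v V) (insert v T))"
    by (rule sum_Pow_insert[OF insert.hyps])
  also have "\<dots> = (\<Sum>T\<in>Pow V. prw p V T)"
    using insert by (intro sum.cong) (auto simp: prw_insert1 prw_insert2 algebra_simps)
  finally show ?case using insert by simp
qed

lemma dom:
  assumes "finite V" 
    and "\<forall>T\<subseteq>V. 0 \<le> w T"
    and "\<forall>v\<in>V. \<forall>T\<subseteq>V-{v}. p * (w T + w (insert v T)) \<le> w (insert v T)"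
    and "\<forall>S S'. S \<subseteq> S' \<longrightarrow> S' \<subseteq> V \<longrightarrow> H S' \<le> H S"
    and "0 \<le> p" "p \<le> 1"
  shows "(\<Sum>T\<in>Pow V. w T * H T) \<le> (\<Sum>T\<in>Pow V. w T) * (\<Sum>T\<in>Pow V. prw p V T * H T)"
  using assms(1-4)
proof (induction V arbitrary: w H rule: finite_induct)
  case empty
  then show ?case by (simp add: prw_def)
next
  case (insert v V)
  define m where "m T = w T + w (insert v T)" for T
  define G where "G T = (1 - p) * H T + p * H (insert v T)" for T
  have m0: "\<forall>T\<subseteq>V. 0 \<le> m T" using insert.prems(1) unfolding m_def
  proof (intro allI impI)
    fix T assume "T \<subseteq> V"
    then have "T \<subseteq> insert v V" "insert v T \<subseteq> insert v V" by auto
    then show "0 \<le> w T + w (insert v T)" using insert.prems(1) by (simp add: add_nonneg_nonneg)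
  qed
  have mc: "\<forall>u\<in>V. \<forall>T\<subseteq>V-{u}. p * (m T + m (insert u T)) \<le> m (insert u T)"
  proof (intro ballI allI impI)
    fix u T assume u: "u \<in> V" and T: "T \<subseteq> V - {u}"
    have uv: "u \<noteq> v" using u insert.hyps by auto
    have 1: "p * (w T + w (insert u T)) \<le> w (insert u T)"
      using insert.prems(2)[rule_format, of u T] u T by blast
    have 2: "p * (w (insert v T) + w (insert u (insert v T))) \<le> w (insert u (insert v T))"
      using insert.prems(2)[rule_format, of u "insert v T"] u T uv by blast
    have e: "insert u (insert v T) = insert v (insert u T)" by auto
    show "p * (m T + m (insert u T)) \<le> m (insert u T)"
      using 1 2 unfolding m_def e by (simp add: algebra_simps)
  qed
  have Ga: "\<forall>S S'. S \<subseteq> S' \<longrightarrow> S' \<subseteq> V \<longrightarrow> G S' \<le> G S"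
  proof (intro allI impI)
    fix S S' assume a: "S \<subseteq> S'" "S' \<subseteq> V"
    have "H S' \<le> H S" using insert.prems(3)[rule_format, of S S'] a by blast
    moreover have "H (insert v S') \<le> H (insert v S)"
      using insert.prems(3)[rule_format, of "insert v S" "insert v S'"] a by blast
    ultimately show "G S' \<le> G S" unfolding G_def using assms(5,6)
      by (intro add_mono mult_left_mono) auto
  qed
  have IH: "(\<Sum>T\<in>Pow V. m T * G T) \<le> (\<Sum>T\<in>Pow V. m T) * (\<Sum>T\<in>Pow V. prw p V T * G T)"
    using insert.IH m0 mc Ga by blast
  have "(\<Sum>T\<in>Pow (insert v V). w T * H T) = (\<Sum>T\<in>Pow V. w T * H T + w (insert v T) * H (insert v T))"
    using insert.hyps by (rule sum_Pow_insert)
  also have "\<dots> \<le> (\<Sum>T\<in>Pow V. m T * G T)"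
  proof (intro sum_mono)
    fix T assume T: "T \<in> Pow V"
    have vT: "v \<notin> T" using T insert.hyps by auto
    have c: "p * (w T + w (insert v T)) \<le> w (insert v T)"
      using insert.prems(2)[rule_format, of v T] T insert.hyps by blast
    have hm: "H (insert v T) \<le> H T" using insert.prems(3)[rule_format, of T "insert v T"] T by blast
    have "0 \<le> (H T - H (insert v T)) * (w (insert v T) - p * (w T + w (insert v T)))"
      using c hm by (intro mult_nonneg_nonneg) auto
    thus "w T * H T + w (insert v T) * H (insert v T) \<le> m T * G T"
      unfolding m_def G_def by (simp add: algebra_simps)
  qed
  also have "\<dots> \<le> (\<Sum>T\<in>Pow V. m T) * (\<Sum>T\<in>Pow V. prw p V T * G T)" by (rule IH)
  also have "(\<Sum>T\<in>Pow V. m T) = (\<Sum>T\<in>Pow (insert v V). w T)"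
    unfolding m_def using insert.hyps by (simp add: sum_Pow_insert)
  also have "(\<Sum>T\<in>Pow V. prw p V T * G T) = (\<Sum>T\<in>Pow (insert v V). prw p (insert v V) T * H T)"
  proof -
    have "(\<Sum>T\<in>Pow (insert v V). prw p (insert v V) T * H T)
       = (\<Sum>T\<in>Pow V. prw p (insert v V) T * H T + prw p (insert v V) (insert v T) * H (insert v T))"
      using insert.hyps by (rule sum_Pow_insert)
    also have "\<dots> = (\<Sum>T\<in>Pow V. prw p V T * G T)"
      using insert.hyps by (intro sum.cong) (auto simp: prw_insert1 prw_insert2 G_def algebra_simps)
    finally show ?thesis by simp
  qed
  finally show ?case .
qed


theorem lemma3p10:
  fixes F :: "'v set \<Rightarrow> 'e set set" and c :: "'e set \<Rightarrow> real" and p \<alpha> :: real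
  assumes "subadditive_coverage F c"
    and "0 \<le> p" and "p \<le> 1"
    and "\<exists>alg. monotone_competitive_indep F c p \<alpha> alg"
  shows "\<exists>alg. competitive_MRF F c p \<alpha> alg"
proof -
  obtain alg where M: "monotone_competitive_indep F c p \<alpha> alg" using assms(4) by blast
  have "competitive_MRF F c p \<alpha> alg"
    unfolding competitive_MRF_def
  proof (intro allI impI)
    fix V and \<mu> :: "'v set pmf" and \<sigma> :: "'v set \<Rightarrow> 'v list"
    assume fi: "feasible_instance F V" and hp: "half_p_MRF p V \<mu>"
      and ls: "\<forall>S. listing (\<sigma> S) (V - S)"
    have finV: "finite V" using fi unfolding feasible_instance_def by blast
    have mrf: "is_MRF V \<mu>" using hp unfolding half_p_MRF_def by (elim conjE)
    obtain psi Hy phi where pmfmu: "\<forall>S. pmf \<mu> S = (if S \<subseteq> V then MRF_weight V psi Hy phi S /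
         (\<Sum>T\<in>Pow V. MRF_weight V psi Hy phi T) else 0)"
      using mrf unfolding is_MRF_def by (elim exE conjE) blast
    have supp: "set_pmf \<mu> \<subseteq> Pow V"
      using pmfmu by (auto simp: set_pmf_iff split: if_splits)
    have pos0: "pmf \<mu> {} > 0"
    proof -
      have "(\<Sum>T\<in>Pow V. MRF_weight V psi Hy phi T) > 0"
        using finV by (intro sum_pos) (auto simp: MRF_weight_def)
      thus ?thesis using pmfmu by (simp add: MRF_weight_def)
    qed
    have cond: "\<forall>v\<in>V. \<forall>T\<subseteq>V-{v}. p * (pmf \<mu> T + pmf \<mu> (insert v T)) \<le> pmf \<mu> (insert v T)"
    proof (intro ballI allI impI)
      fix v T assume v: "v \<in> V" and T: "T \<subseteq> V - {v}"
      have vT: "v \<notin> T" using T by auto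
      have s1: "{S. v \<in> S \<and> S - {v} = T} = {insert v T}" using vT by auto
      have s2: "{S. S - {v} = T} = {T, insert v T}" using vT by auto
      have r: "measure_pmf.prob \<mu> {S. v \<in> S \<and> S - {v} = T} / measure_pmf.prob \<mu> {S. S - {v} = T} \<ge> p"
      proof -
        have "\<forall>v\<in>V. \<forall>T \<subseteq> V - {v}.
          measure_pmf.prob \<mu> {S. v \<in> S \<and> S - {v} = T} / measure_pmf.prob \<mu> {S. S - {v} = T} \<ge> p"
          using hp unfolding half_p_MRF_def by (elim conjE)
        then show ?thesis using v T by blast
      qed
      have e1: "measure_pmf.prob \<mu> {S. v \<in> S \<and> S - {v} = T} = pmf \<mu> (insert v T)"
        unfolding s1 by (simp add: measure_pmf_single)
      have e2: "measure_pmf.prob \<mu> {S. S - {v} = T} = pmf \<mu> T + pmf \<mu> (insert v T)"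
      proof -
        have ne: "T \<noteq> insert v T" using vT by auto
        show ?thesis unfolding s2 using ne by (simp add: measure_measure_pmf_finite)
      qed
      have r2: "pmf \<mu> (insert v T) / (pmf \<mu> T + pmf \<mu> (insert v T)) \<ge> p" using r e1 e2 by simp
      show "p * (pmf \<mu> T + pmf \<mu> (insert v T)) \<le> pmf \<mu> (insert v T)"
      proof (cases "pmf \<mu> T + pmf \<mu> (insert v T) = 0")
        case True
        then have "p \<le> 0" using r2 by simp
        then show ?thesis using assms(2) by simp
      next
        case False
        then have "pmf \<mu> T + pmf \<mu> (insert v T) > 0" by (simp add: add_nonneg_nonneg order_less_le)
        then show ?thesis using r2 by (simp add: pos_le_divide_eq mult.commute)
      qed
    qed
    have pr0: "prw p V {} > 0"
    proof (cases "V = {}")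
      case True then show ?thesis by (simp add: prw_def)
    next
      case False
      then obtain v where v: "v \<in> V" by blast
      have "p * (pmf \<mu> {} + pmf \<mu> (insert v {})) \<le> pmf \<mu> (insert v {})" using cond v by blast
      then have "p < 1" using pos0 assms(3) by (cases "p = 1") auto
      then show ?thesis by (simp add: prw_def)
    qed
    define f where "f S = (if S \<subseteq> V then prw p V S else 0)" for S
    have f0: "\<And>S. 0 \<le> f S" unfolding f_def prw_def using assms(2,3)
      by (auto intro!: prod_nonneg)
    have f1: "(\<integral>\<^sup>+S. ennreal (f S) \<partial>count_space UNIV) = 1"
    proof -
      have "(\<integral>\<^sup>+S. ennreal (f S) \<partial>count_space UNIV) = (\<Sum>S\<in>Pow V. ennreal (f S))"
        using finV by (intro nn_integral_count_space') (auto simp: f_def)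
      also have "\<dots> = ennreal (\<Sum>S\<in>Pow V. f S)" using f0 by simp
      also have "(\<Sum>S\<in>Pow V. f S) = (\<Sum>S\<in>Pow V. prw p V S)" by (intro sum.cong) (auto simp: f_def)
      finally show ?thesis using prw_sum[OF finV] by simp
    qed
    define \<nu> where "\<nu> = embed_pmf f"
    have pmfnu: "\<And>S. pmf \<nu> S = f S" unfolding \<nu>_def using f0 f1 by (simp add: pmf_embed_pmf)
    have indep: "indep_sample p V \<nu>" unfolding indep_sample_def pmfnu f_def prw_def by simp
    have suppnu: "set_pmf \<nu> \<subseteq> Pow V" by (auto simp: set_pmf_iff pmfnu f_def split: if_splits)
    have emp: "{} \<in> set_pmf \<nu>" using pr0 by (simp add: set_pmf_iff pmfnu f_def)
    define h where "h S = (\<integral>\<^sup>+A. ennreal (c (A S (\<sigma> S))) \<partial>measure_pmf alg)" for S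
    define U where "U S' = {S. S' \<subseteq> S \<and> S \<subseteq> V}" for S' :: "'v set"
    define Hm where "Hm S' = Max (h ` U S')" for S'
    define g where "g S' = (if S' \<subseteq> V then (SOME S. S \<in> U S' \<and> h S = Hm S') else S')" for S'
    have Ufin: "finite (U S')" for S'
      using finite_subset[of "U S'" "Pow V"] finV unfolding U_def by auto
    have Une: "S' \<subseteq> V \<Longrightarrow> U S' \<noteq> {}" for S' unfolding U_def by auto
    have g: "S' \<subseteq> V \<Longrightarrow> g S' \<in> U S' \<and> h (g S') = Hm S'" for S'
    proof -
      assume a: "S' \<subseteq> V"
      have "Hm S' \<in> h ` U S'" unfolding Hm_def using Ufin Une[OF a] by (intro Max_in) auto
      then have "\<exists>S. S \<in> U S' \<and> h S = Hm S'" by auto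
      then have "(SOME S. S \<in> U S' \<and> h S = Hm S') \<in> U S' \<and> h (SOME S. S \<in> U S' \<and> h S = Hm S') = Hm S'"
        by (rule someI_ex)
      then show ?thesis unfolding g_def using a by simp
    qed
    define adv where "adv S' = (g S', \<sigma> (g S'))" for S'
    have advok: "\<forall>S'\<subseteq>V. S' \<subseteq> fst (adv S') \<and> fst (adv S') \<subseteq> V \<and> listing (snd (adv S')) (V - fst (adv S'))"
      using g ls unfolding adv_def U_def by auto
    have M1: "expected_cost c \<nu> alg adv \<le> ennreal (\<alpha> * OPT F c V)"
      using M fi indep advok unfolding monotone_competitive_indep_def by blast
    have ecnu: "expected_cost c \<nu> alg adv = (\<Sum>S\<in>Pow V. Hm S * ennreal (prw p V S))"
    proof -
      have "expected_cost c \<nu> alg adv = (\<integral>\<^sup>+S. h (g S) \<partial>measure_pmf \<nu>)"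
        unfolding expected_cost_def adv_def h_def by simp
      also have "\<dots> = (\<Sum>S\<in>Pow V. h (g S) * pmf \<nu> S)"
        using finV suppnu by (intro nn_integral_measure_pmf_support) auto
      also have "\<dots> = (\<Sum>S\<in>Pow V. Hm S * ennreal (prw p V S))"
        using g by (intro sum.cong) (auto simp: pmfnu f_def)
      finally show ?thesis .
    qed
    have "Hm {} * ennreal (prw p V {}) \<le> (\<Sum>S\<in>Pow V. Hm S * ennreal (prw p V S))"
      using finV by (intro member_le_sum) auto
    also have "\<dots> < top" using M1 ecnu by (metis ennreal_less_top order.strict_trans1)
    finally have "Hm {} * ennreal (prw p V {}) \<noteq> top" by simp
    then have Hm0: "Hm {} < top" using pr0 by (simp add: ennreal_mult_eq_top_iff top.not_eq_extremum)
    have Hmle: "S' \<subseteq> V \<Longrightarrow> Hm S' \<le> Hm {}" for S'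
    proof -
      assume a: "S' \<subseteq> V"
      have "h ` U S' \<subseteq> h ` U {}" by (auto simp: U_def)
      then show ?thesis unfolding Hm_def using Une[OF a] Ufin[of "{}"] by (intro Max_mono) auto
    qed
    have hle: "S \<subseteq> V \<Longrightarrow> h S \<le> Hm S" for S
    proof -
      assume a: "S \<subseteq> V"
      have "h S \<in> h ` U S" using a by (auto simp: U_def)
      then show ?thesis unfolding Hm_def using Ufin[of S] by (intro Max_ge) auto
    qed
    have Hmfin: "S' \<subseteq> V \<Longrightarrow> Hm S' < top" for S' using Hmle Hm0 by (meson order.strict_trans1)
    have hfin: "S \<subseteq> V \<Longrightarrow> h S < top" for S using hle Hmfin by (meson order.strict_trans1)
    define hr where "hr S = enn2real (h S)" for S
    define Hr where "Hr S = enn2real (Hm S)" for S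
    have hr_eq: "S \<subseteq> V \<Longrightarrow> h S = ennreal (hr S)" for S using hfin unfolding hr_def by simp
    have Hr_eq: "S \<subseteq> V \<Longrightarrow> Hm S = ennreal (Hr S)" for S using Hmfin unfolding Hr_def by simp
    have hr_le: "S \<subseteq> V \<Longrightarrow> hr S \<le> Hr S" for S
      unfolding hr_def Hr_def using hle Hmfin by (intro enn2real_mono) auto
    have Hr_anti: "\<forall>S S'. S \<subseteq> S' \<longrightarrow> S' \<subseteq> V \<longrightarrow> Hr S' \<le> Hr S"
    proof (intro allI impI)
      fix S S' assume a: "S \<subseteq> S'" "S' \<subseteq> V"
      have "h ` U S' \<subseteq> h ` U S" using a by (auto simp: U_def)
      then have "Hm S' \<le> Hm S" unfolding Hm_def using Une[OF a(2)] Ufin[of S] by (intro Max_mono) auto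
      then show "Hr S' \<le> Hr S" unfolding Hr_def using Hmfin a by (intro enn2real_mono) auto
    qed
    have hr0: "0 \<le> hr S" for S unfolding hr_def by simp
    have Hr0: "0 \<le> Hr S" for S unfolding Hr_def by simp
    have prw0: "0 \<le> prw p V S" for S unfolding prw_def using assms(2,3) by (auto intro!: prod_nonneg)
    have D: "(\<Sum>T\<in>Pow V. pmf \<mu> T * Hr T) \<le> (\<Sum>T\<in>Pow V. pmf \<mu> T) * (\<Sum>T\<in>Pow V. prw p V T * Hr T)"
      using finV cond Hr_anti assms(2,3) by (intro dom) auto
    have sum1: "(\<Sum>T\<in>Pow V. pmf \<mu> T) = 1" using finV supp by (intro sum_pmf_eq_1) auto
    have valid: "valid_on F \<mu> alg (\<lambda>S. (S, \<sigma> S))"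
      unfolding valid_on_def
    proof (intro ballI)
      fix S A assume S: "S \<in> set_pmf \<mu>" and A: "A \<in> set_pmf alg"
      have SV: "S \<subseteq> V" using S supp by auto
      define adv2 where "adv2 S' = (S \<union> S', \<sigma> (S \<union> S'))" for S'
      have "\<forall>S'\<subseteq>V. S' \<subseteq> fst (adv2 S') \<and> fst (adv2 S') \<subseteq> V \<and> listing (snd (adv2 S')) (V - fst (adv2 S'))"
        using SV ls unfolding adv2_def by auto
      then have "valid_on F \<nu> alg adv2"
        using M fi indep unfolding monotone_competitive_indep_def by blast
      then have "valid_run F A (fst (adv2 {})) (snd (adv2 {}))" using emp A unfolding valid_on_def by blast
      then show "valid_run F A (fst (S, \<sigma> S)) (snd (S, \<sigma> S))" unfolding adv2_def by simp
    qed
    have "expected_cost c \<mu> alg (\<lambda>S. (S, \<sigma> S)) = (\<integral>\<^sup>+S. h S \<partial>measure_pmf \<mu>)"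
      unfolding expected_cost_def h_def by simp
    also have "\<dots> = (\<Sum>S\<in>Pow V. h S * pmf \<mu> S)"
      using finV supp by (intro nn_integral_measure_pmf_support) auto
    also have "\<dots> = (\<Sum>S\<in>Pow V. ennreal (hr S * pmf \<mu> S))"
      using hr_eq hr0 by (intro sum.cong) (auto simp: ennreal_mult)
    also have "\<dots> = ennreal (\<Sum>S\<in>Pow V. hr S * pmf \<mu> S)" using hr0 by (intro sum_ennreal) auto
    also have "\<dots> \<le> ennreal (\<Sum>S\<in>Pow V. pmf \<mu> S * Hr S)"
      using hr_le by (intro ennreal_leI sum_mono) (auto simp: mult.commute intro: mult_right_mono)
    also have "\<dots> \<le> ennreal (\<Sum>S\<in>Pow V. prw p V S * Hr S)"
      using D sum1 by (intro ennreal_leI) simp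
    also have "\<dots> = (\<Sum>S\<in>Pow V. ennreal (prw p V S * Hr S))"
      using prw0 Hr0 by (intro sum_ennreal[symmetric]) auto
    also have "\<dots> = (\<Sum>S\<in>Pow V. Hm S * ennreal (prw p V S))"
      using Hr_eq prw0 Hr0 by (intro sum.cong) (auto simp: ennreal_mult mult.commute)
    also have "\<dots> = expected_cost c \<nu> alg adv" using ecnu by simp
    also have "\<dots> \<le> ennreal (\<alpha> * OPT F c V)" by (rule M1)
    finally show "valid_on F \<mu> alg (\<lambda>S. (S, \<sigma> S)) \<and>
        expected_cost c \<mu> alg (\<lambda>S. (S, \<sigma> S)) \<le> ennreal (\<alpha> * OPT F c V)"
      using valid by blast
  qed
  then show ?thesis by blast
qed

end
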